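(* Let $G$ be a layered, structurally saturated sequent. Then the relation $\le$ on the layers of $G$ is a (partial) order relation, i.e. reflexive, transitive and antisymmetric.
   Context: A sequent $G$ is $\mathcal{R},\Gamma\Rightarrow\Delta$ where $\mathcal{R}$ is a set of relational atoms $xRy$ or $x\le y$ between labels and $\Gamma,\Delta$ are multisets of labelled formulas $x{:}A$. Write $x\le_G y$, $xR_Gy$ if the corresponding atom is in $\mathcal{R}$; $x{:}C^\bullet$ means $x{:}C\in\Gamma$. $G$ is structurally saturated if: $x\le_G y$ and $x{:}C^\bullet$ imply $y{:}C^\bullet$; $xR_Gy$ and $y\le_G z$ imply some $u$ with $x\le_G u$ and $uR_Gz$; $xR_Gy$ and $x\le_G z$ imply some $u$ with $y\le_G u$ and $zR_Gu$; $\le_G$ and $R_G$ are both transitive and reflexive on all labels of $G$. A layer of $G$ is an equivalence class of the reflexive-transitive closure $\sim_G$ of $R_G\cup R_G^{-1}$. $G$ is layered if for all labels $x,x',y,y'$: (1) if $x\sim_G y$... precisely: if $x \mathrel{(R_G\cup R_G^{-1})^*} y$ with $x\ne y$ then neither $x\le_G y$ nor $y\le_G x$; (2) if $x \mathrel{(R_G\cup R_G^{-1})^*} y$, $x' \mathrel{(R_G\cup R_G^{-1})^*} y'$, $x\le_G x'$ and $x\ne x'$, then not $y'\le_G y$. For layers $L_1,L_2$, $L_1\le L_2$ iff there are $x\in L_1$, $y\in L_2$ with $x\le_G y$. *)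

theory Defs
  imports Main "HOL-Library.Multiset"
begin

datatype 'l rel_atom = RelR 'l 'l | RelLe 'l 'l

datatype ('l, 'f) sequent =
  Seq "'l rel_atom set" "('l \<times> 'f) multiset" "('l \<times> 'f) multiset"

fun rels :: "('l, 'f) sequent \<Rightarrow> 'l rel_atom set" where
  "rels (Seq R \<Gamma> \<Delta>) = R"
fun ante :: "('l, 'f) sequent \<Rightarrow> ('l \<times> 'f) multiset" where
  "ante (Seq R \<Gamma> \<Delta>) = \<Gamma>"
fun succ :: "('l, 'f) sequent \<Rightarrow> ('l \<times> 'f) multiset" where
  "succ (Seq R \<Gamma> \<Delta>) = \<Delta>"

definition leG :: "('l, 'f) sequent \<Rightarrow> 'l \<Rightarrow> 'l \<Rightarrow> bool" where
  "leG G x y \<longleftrightarrow> RelLe x y \<in> rels G"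

definition RG :: "('l, 'f) sequent \<Rightarrow> 'l \<Rightarrow> 'l \<Rightarrow> bool" where
  "RG G x y \<longleftrightarrow> RelR x y \<in> rels G"

fun atom_labels :: "'l rel_atom \<Rightarrow> 'l set" where
  "atom_labels (RelR x y) = {x, y}"
| "atom_labels (RelLe x y) = {x, y}"

definition labels :: "('l, 'f) sequent \<Rightarrow> 'l set" where
  "labels G = (\<Union>a\<in>rels G. atom_labels a) \<union> fst ` set_mset (ante G) \<union> fst ` set_mset (succ G)"

definition struct_saturated :: "('l, 'f) sequent \<Rightarrow> bool" where
  "struct_saturated G \<longleftrightarrow>
     (\<forall>x y C. leG G x y \<and> (x, C) \<in># ante G \<longrightarrow> (y, C) \<in># ante G) \<and>
     (\<forall>x y z. RG G x y \<and> leG G y z \<longrightarrow> (\<exists>u. leG G x u \<and> RG G u z)) \<and>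
     (\<forall>x y z. RG G x y \<and> leG G x z \<longrightarrow> (\<exists>u. leG G y u \<and> RG G z u)) \<and>
     (\<forall>x y z. leG G x y \<and> leG G y z \<longrightarrow> leG G x z) \<and>
     (\<forall>x y z. RG G x y \<and> RG G y z \<longrightarrow> RG G x z) \<and>
     (\<forall>x\<in>labels G. leG G x x \<and> RG G x x)"

definition simG :: "('l, 'f) sequent \<Rightarrow> ('l \<times> 'l) set" where
  "simG G = ({(x, y). RG G x y} \<union> {(x, y). RG G x y}\<inverse>)\<^sup>*"

definition layered :: "('l, 'f) sequent \<Rightarrow> bool" where
  "layered G \<longleftrightarrow>
     (\<forall>x y. (x, y) \<in> simG G \<and> x \<noteq> y \<longrightarrow> \<not> leG G x y \<and> \<not> leG G y x) \<and>
     (\<forall>x x' y y'. (x, y) \<in> simG G \<and> (x', y') \<in> simG G \<and> leG G x x' \<and> x \<noteq> x'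
        \<longrightarrow> \<not> leG G y' y)"

definition layers :: "('l, 'f) sequent \<Rightarrow> 'l set set" where
  "layers G = labels G // (simG G \<inter> (labels G \<times> labels G))"

definition layer_le :: "('l, 'f) sequent \<Rightarrow> 'l set \<Rightarrow> 'l set \<Rightarrow> bool" where
  "layer_le G L1 L2 \<longleftrightarrow> (\<exists>x\<in>L1. \<exists>y\<in>L2. leG G x y)"

end

theory Submission
  imports Defs
begin

lemma leG_labels: "leG G x y \<Longrightarrow> x \<in> labels G \<and> y \<in> labels G"
  unfolding leG_def labels_def by force

lemma simG_sym: "(x, y) \<in> simG G \<Longrightarrow> (y, x) \<in> simG G"
proof -
  have "sym ({(x, y). RG G x y} \<union> {(x, y). RG G x y}\<inverse>)" by (auto simp: sym_def)
  then have "sym (simG G)" unfolding simG_def by (rule sym_rtrancl)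
  then show "(x, y) \<in> simG G \<Longrightarrow> (y, x) \<in> simG G" by (meson symD)
qed

lemma simG_trans: "(x, y) \<in> simG G \<Longrightarrow> (y, z) \<in> simG G \<Longrightarrow> (x, z) \<in> simG G"
  unfolding simG_def by (rule rtrancl_trans)

lemma simG_refl: "(x, x) \<in> simG G"
  unfolding simG_def by simp

lemma layer_form: "L \<in> layers G \<Longrightarrow> \<exists>x\<in>labels G. L = {y. y \<in> labels G \<and> (x, y) \<in> simG G}"
  unfolding layers_def quotient_def by auto

lemma layer_mem: "L \<in> layers G \<Longrightarrow> x \<in> L \<Longrightarrow> y \<in> L \<Longrightarrow> (x, y) \<in> simG G \<and> x \<in> labels G"
proof -
  assume "L \<in> layers G" "x \<in> L" "y \<in> L"
  then obtain z where Le: "L = {y. y \<in> labels G \<and> (z, y) \<in> simG G}" using layer_form by blast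
  have zx: "(z, x) \<in> simG G" and zy: "(z, y) \<in> simG G" and xl: "x \<in> labels G"
    using \<open>x \<in> L\<close> \<open>y \<in> L\<close> unfolding Le by simp_all
  show ?thesis using simG_trans[OF simG_sym[OF zx] zy] xl by simp
qed

lemma layer_ext: "L \<in> layers G \<Longrightarrow> x \<in> L \<Longrightarrow> (x, y) \<in> simG G \<Longrightarrow> y \<in> labels G \<Longrightarrow> y \<in> L"
proof -
  assume "L \<in> layers G" "x \<in> L" "(x, y) \<in> simG G" "y \<in> labels G"
  then obtain z where L: "L = {y. y \<in> labels G \<and> (z, y) \<in> simG G}" using layer_form by blast
  have "(z, x) \<in> simG G" using \<open>x \<in> L\<close> unfolding L by blast
  then have "(z, y) \<in> simG G" using simG_trans \<open>(x, y) \<in> simG G\<close> by metis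
  then show ?thesis using \<open>y \<in> labels G\<close> unfolding L by blast
qed

lemma layer_eq: "L \<in> layers G \<Longrightarrow> L' \<in> layers G \<Longrightarrow> x \<in> L \<Longrightarrow> x \<in> L' \<Longrightarrow> L = L'"
proof -
  assume a: "L \<in> layers G" "L' \<in> layers G" "x \<in> L" "x \<in> L'"
  have "\<And>y. y \<in> L \<Longrightarrow> y \<in> L'"
  proof -
    fix y assume "y \<in> L"
    then have "(x, y) \<in> simG G" "y \<in> labels G" using layer_mem[OF a(1) a(3)] layer_mem[OF a(1) \<open>y \<in> L\<close> a(3)] by auto
    then show "y \<in> L'" using layer_ext[OF a(2) a(4)] by blast
  qed
  moreover have "\<And>y. y \<in> L' \<Longrightarrow> y \<in> L"
  proof -
    fix y assume "y \<in> L'"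
    then have "(x, y) \<in> simG G" "y \<in> labels G" using layer_mem[OF a(2) a(4)] layer_mem[OF a(2) \<open>y \<in> L'\<close> a(4)] by auto
    then show "y \<in> L" using layer_ext[OF a(1) a(3)] by blast
  qed
  ultimately show ?thesis by blast
qed

lemma move_down:
  assumes sat: "struct_saturated G"
    and s: "(a, a') \<in> simG G"
  shows "leG G a b \<Longrightarrow> \<exists>b'. (b, b') \<in> simG G \<and> leG G a' b'"
  using s[unfolded simG_def]
proof (induction arbitrary: b rule: rtrancl_induct)
  case base
  then show ?case using simG_refl[of b G] by blast
next
  case (step y z)
  from step.IH[OF step.prems] obtain c where c: "(b, c) \<in> simG G" "leG G y c" by blast
  from step.hyps(2) have "RG G y z \<or> RG G z y" by auto
  then show ?case
  proof
    assume "RG G y z"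
    with sat c(2) obtain u where "leG G z u" "RG G c u"
      unfolding struct_saturated_def by blast
    moreover have "(c, u) \<in> simG G" using \<open>RG G c u\<close> unfolding simG_def by blast
    ultimately show ?thesis using simG_trans[OF c(1)] by blast
  next
    assume "RG G z y"
    with sat c(2) obtain u where "leG G z u" "RG G u c"
      unfolding struct_saturated_def by blast
    moreover have "(c, u) \<in> simG G" using \<open>RG G u c\<close> unfolding simG_def by blast
    ultimately show ?thesis using simG_trans[OF c(1)] by blast
  qed
qed

theorem mainTheorem4:
  fixes G :: "('l, 'f) sequent"
  assumes "layered G" and "struct_saturated G"
  shows "(\<forall>L\<in>layers G. layer_le G L L)
       \<and> (\<forall>L1\<in>layers G. \<forall>L2\<in>layers G. \<forall>L3\<in>layers G.
            layer_le G L1 L2 \<and> layer_le G L2 L3 \<longrightarrow> layer_le G L1 L3)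
       \<and> (\<forall>L1\<in>layers G. \<forall>L2\<in>layers G.
            layer_le G L1 L2 \<and> layer_le G L2 L1 \<longrightarrow> L1 = L2)"
proof (intro conjI ballI impI)
  have letr: "\<And>x y z. leG G x y \<Longrightarrow> leG G y z \<Longrightarrow> leG G x z"
    using assms(2) unfolding struct_saturated_def by blast
  have lerefl: "\<And>x. x \<in> labels G \<Longrightarrow> leG G x x"
    using assms(2) unfolding struct_saturated_def by blast
  have mem: "\<And>L x y. L \<in> layers G \<Longrightarrow> x \<in> L \<Longrightarrow> y \<in> L \<Longrightarrow> (x, y) \<in> simG G \<and> x \<in> labels G"
    by (rule layer_mem)
  have ext: "\<And>L x y. L \<in> layers G \<Longrightarrow> x \<in> L \<Longrightarrow> (x, y) \<in> simG G \<Longrightarrow> y \<in> labels G \<Longrightarrow> y \<in> L"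
    by (rule layer_ext)
  fix L assume L: "L \<in> layers G"
  obtain z where Le: "z \<in> labels G" "L = {y. y \<in> labels G \<and> (z, y) \<in> simG G}" using layer_form[OF L] by blast
  then have "z \<in> labels G" "z \<in> L" using simG_refl[of z G] by simp_all
  then obtain x where "x \<in> labels G" "x \<in> L" by blast
  then show "layer_le G L L" unfolding layer_le_def using lerefl by blast
next
  fix L1 L2 L3 assume L: "L1 \<in> layers G" "L2 \<in> layers G" "L3 \<in> layers G"
    and h: "layer_le G L1 L2 \<and> layer_le G L2 L3"
  from h obtain x1 y2 x2 y3 where a: "x1 \<in> L1" "y2 \<in> L2" "leG G x1 y2" "x2 \<in> L2" "y3 \<in> L3" "leG G x2 y3"
    unfolding layer_le_def by blast
  have mem: "\<And>L x y. L \<in> layers G \<Longrightarrow> x \<in> L \<Longrightarrow> y \<in> L \<Longrightarrow> (x, y) \<in> simG G \<and> x \<in> labels G"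
    by (rule layer_mem)
  have ext: "\<And>L x y. L \<in> layers G \<Longrightarrow> x \<in> L \<Longrightarrow> (x, y) \<in> simG G \<Longrightarrow> y \<in> labels G \<Longrightarrow> y \<in> L"
    by (rule layer_ext)
  have letr: "\<And>x y z. leG G x y \<Longrightarrow> leG G y z \<Longrightarrow> leG G x z"
    using assms(2) unfolding struct_saturated_def by blast
  from mem[OF L(2) a(4) a(2)] obtain b where b: "(y3, b) \<in> simG G" "leG G y2 b"
    using move_down[OF assms(2) _ a(6)] by blast
  have "b \<in> L3" using ext[OF L(3) a(5) b(1)] leG_labels[OF b(2)] by blast
  then show "layer_le G L1 L3" unfolding layer_le_def using a(1) letr[OF a(3) b(2)] by blast
next
  fix L1 L2 assume L: "L1 \<in> layers G" "L2 \<in> layers G"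
    and h: "layer_le G L1 L2 \<and> layer_le G L2 L1"
  from h obtain x1 y2 x2 y1 where a: "x1 \<in> L1" "y2 \<in> L2" "leG G x1 y2" "x2 \<in> L2" "y1 \<in> L1" "leG G x2 y1"
    unfolding layer_le_def by blast
  have mem: "\<And>L x y. L \<in> layers G \<Longrightarrow> x \<in> L \<Longrightarrow> y \<in> L \<Longrightarrow> (x, y) \<in> simG G \<and> x \<in> labels G"
    by (rule layer_mem)
  have eqL: "\<And>L L' x. L \<in> layers G \<Longrightarrow> L' \<in> layers G \<Longrightarrow> x \<in> L \<Longrightarrow> x \<in> L' \<Longrightarrow> L = L'"
    by (rule layer_eq)
  show "L1 = L2"
  proof (rule ccontr)
    assume ne: "L1 \<noteq> L2"
    then have "x1 \<noteq> y2" using eqL L a by blast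
    from mem[OF L(2) a(4) a(2)] obtain b where b: "(y1, b) \<in> simG G" "leG G y2 b"
      using move_down[OF assms(2) _ a(6)] by blast
    have xb: "(x1, b) \<in> simG G" using simG_trans[OF conjunct1[OF mem[OF L(1) a(1) a(5)]] b(1)] .
    have l2: "\<forall>x x' y y'. (x, y) \<in> simG G \<and> (x', y') \<in> simG G \<and> leG G x x' \<and> x \<noteq> x'
        \<longrightarrow> \<not> leG G y' y" using assms(1) unfolding layered_def by (rule conjunct2)
    have "\<not> leG G y2 b" using l2 xb simG_refl[of y2 G] a(3) \<open>x1 \<noteq> y2\<close> by blast
    then show False using b(2) by contradiction
  qed
qed

end
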